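(* Consider $\min_x F(x)=f(x)+r(x)$, $f=\frac1n\sum_{i=1}^nf_i$, each $f_i$ differentiable with $\|\nabla f_i(x)\|\le G_i$ and $\|\nabla f_i(x)-\nabla f_i(y)\|\le L_i\|x-y\|$, $r:\mathbb{R}^d\to\mathbb{R}$ possibly non-convex and non-smooth with existing proximal mapping, $F$ attaining its minimum $F(x^* )$, and $\tilde L=\frac1n\sum_iL_i>0$. Let two proper samplings be given: one (for the outer batches) with marginals $p'_i$, pair-probability matrix $\mathbf P'$ and a vector $v'$ with $\mathbf P'-p'p'^\top\preceq\mathrm{Diag}(p'_1v'_1,\dots,p'_nv'_n)$, and one (for the inner batches) with marginals $p_i$, matrix $\mathbf P$ and a vector $v$ with $\mathbf P-pp^\top\preceq\mathrm{Diag}(p_1v_1,\dots,p_nv_n)$. Let $Q=\sum_{i=1}^n\frac{v_iL_i^2}{p_in^2}$ and $Q'=\sum_{i=1}^n\frac{v'_iG_i^2}{p'_in^2}$. Run ProxSPIDER-AS with $\mathcal J$ outer loops, $m$ inner loops, initial point $\tilde x^1$ and stepsize $\eta=\frac{1}{4\tilde L+2mQ/\tilde L}$. Then $$\frac1{m\mathcal J}\sum_{j=1}^{\mathcal J}\sum_{t=1}^mE\big[\mathrm{dist}(0,\hat\partial F(x_{t+1}^{(j)}))^2\big]\le\frac1{m\mathcal J}\Big(24\tilde L+\frac{4mQ}{\tilde L}\Big)\Delta+2Q',$$ where $\Delta=F(\tilde x^1)-F(x^* )$.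
   Context: $\mathrm{prox}_{\eta r}(y)=\arg\min_x\{\frac1{2\eta}\|x-y\|^2+r(x)\}$ (nonempty; any element used). A sampling is a random subset $S\subseteq[n]$, with marginals $p_i=\mathrm{Prob}(i\in S)>0$ (proper) and $\mathbf P_{ij}=\mathrm{Prob}(\{i,j\}\subseteq S)$; $\preceq$ is the positive semidefinite order. ProxSPIDER-AS: for $j=1,\dots,\mathcal J$: $x_0^{(j)}=\tilde x^{(j)}$; draw $S^{(j)}$ from the outer sampling and set $\mathcal V_0^{(j)}=\sum_{i\in S^{(j)}}\frac1{np'_i}\nabla f_i(x_0^{(j)})$; $x_1^{(j)}=x_0^{(j)}$; for $t=1,\dots,m$: draw $S_t^{(j)}$ from the inner sampling, set $\mathcal V_t^{(j)}=\sum_{i\in S_t^{(j)}}\frac1{np_i}(\nabla f_i(x_t^{(j)})-\nabla f_i(x_{t-1}^{(j)}))+\mathcal V_{t-1}^{(j)}$ and $x_{t+1}^{(j)}\in\mathrm{prox}_{\eta r}(x_t^{(j)}-\eta\mathcal V_t^{(j)})$; then $\tilde x^{(j+1)}=x_{m+1}^{(j)}$. All sampled sets are drawn independently of all past randomness. $\hat\partial F$ is the Fréchet subdifferential, $\hat\partial F(x)=\{v:\liminf_{\bar x\to x}\frac{F(\bar x)-F(x)-v^\top(\bar x-x)}{\|\bar x-x\|}\ge0\}$, $\mathrm{dist}(0,A)=\inf_{v\in A}\|v\|$. *)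

theory Defs
  imports "HOL-Analysis.Analysis" "HOL-Probability.Probability"
begin

definition frechet_subdiff :: "('a::euclidean_space \<Rightarrow> real) \<Rightarrow> 'a \<Rightarrow> 'a set" where
  "frechet_subdiff F x =
     {v. Liminf (at x) (\<lambda>y. ereal ((F y - F x - inner v (y - x)) / norm (y - x))) \<ge> 0}"

definition prox_set :: "('a::euclidean_space \<Rightarrow> real) \<Rightarrow> real \<Rightarrow> 'a \<Rightarrow> 'a set" where
  "prox_set r \<eta> y = {x. \<forall>z. (1 / (2 * \<eta>)) * (norm (x - y))\<^sup>2 + r x
                              \<le> (1 / (2 * \<eta>)) * (norm (z - y))\<^sup>2 + r z}"

text \<open>Samplings: random subsets of [n] = {0..<n}, given as pmfs on sets.\<close>
definition sampling_on :: "nat \<Rightarrow> nat set pmf \<Rightarrow> bool" where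
  "sampling_on n S \<longleftrightarrow> set_pmf S \<subseteq> Pow {..<n}"

definition marg :: "nat set pmf \<Rightarrow> nat \<Rightarrow> real" where
  "marg S i = measure_pmf.prob S {A. i \<in> A}"

definition pairprob :: "nat set pmf \<Rightarrow> nat \<Rightarrow> nat \<Rightarrow> real" where
  "pairprob S i j = measure_pmf.prob S {A. i \<in> A \<and> j \<in> A}"

definition proper_sampling :: "nat \<Rightarrow> nat set pmf \<Rightarrow> bool" where
  "proper_sampling n S \<longleftrightarrow> sampling_on n S \<and> (\<forall>i<n. marg S i > 0)"

text \<open>P - p p^T \<preceq> Diag(p_1 v_1, ..., p_n v_n), written out in the PSD order.\<close>
definition eso :: "nat \<Rightarrow> nat set pmf \<Rightarrow> (nat \<Rightarrow> real) \<Rightarrow> bool" where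
  "eso n S v \<longleftrightarrow> (\<forall>z::nat \<Rightarrow> real.
     (\<Sum>i<n. \<Sum>j<n. (pairprob S i j - marg S i * marg S j) * z i * z j)
       \<le> (\<Sum>i<n. marg S i * v i * (z i)\<^sup>2))"

text \<open>State after k inner steps: (x_k, x_{k+1}, V_k).  g i = gradient of f_i,
  p = inner marginals, prox = selection of prox_{eta r}, St t = inner sample at step t.\<close>
primrec spider_inner ::
  "(nat \<Rightarrow> 'a::euclidean_space \<Rightarrow> 'a) \<Rightarrow> nat \<Rightarrow> (nat \<Rightarrow> real) \<Rightarrow> ('a \<Rightarrow> 'a) \<Rightarrow> real
   \<Rightarrow> (nat \<Rightarrow> nat set) \<Rightarrow> 'a \<Rightarrow> 'a \<Rightarrow> nat \<Rightarrow> 'a \<times> 'a \<times> 'a" where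
  "spider_inner g n p prox \<eta> St x0 V0 0 = (x0, x0, V0)"
| "spider_inner g n p prox \<eta> St x0 V0 (Suc k) =
     (case spider_inner g n p prox \<eta> St x0 V0 k of (xa, xb, V) \<Rightarrow>
        let V' = (\<Sum>i\<in>St (Suc k). (1 / (real n * p i)) *\<^sub>R (g i xb - g i xa)) + V
        in (xb, prox (xb - \<eta> *\<^sub>R V'), V'))"

definition spider_V0 :: "(nat \<Rightarrow> 'a::euclidean_space \<Rightarrow> 'a) \<Rightarrow> nat \<Rightarrow> (nat \<Rightarrow> real) \<Rightarrow> nat set \<Rightarrow> 'a \<Rightarrow> 'a" where
  "spider_V0 g n p' S x = (\<Sum>i\<in>S. (1 / (real n * p' i)) *\<^sub>R g i x)"

text \<open>spider_outer ... k = x-tilde^{(k+1)}; outS j / inS j t are the samples of outer loop j.\<close>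
primrec spider_outer ::
  "(nat \<Rightarrow> 'a::euclidean_space \<Rightarrow> 'a) \<Rightarrow> nat \<Rightarrow> (nat \<Rightarrow> real) \<Rightarrow> (nat \<Rightarrow> real) \<Rightarrow> ('a \<Rightarrow> 'a)
   \<Rightarrow> real \<Rightarrow> nat \<Rightarrow> (nat \<Rightarrow> nat set) \<Rightarrow> (nat \<Rightarrow> nat \<Rightarrow> nat set) \<Rightarrow> 'a \<Rightarrow> nat \<Rightarrow> 'a" where
  "spider_outer g n p p' prox \<eta> m outS inS x1 0 = x1"
| "spider_outer g n p p' prox \<eta> m outS inS x1 (Suc k) =
     (let x0 = spider_outer g n p p' prox \<eta> m outS inS x1 k
      in fst (snd (spider_inner g n p prox \<eta> (inS (Suc k)) x0
                     (spider_V0 g n p' (outS (Suc k)) x0) m)))"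

text \<open>spider_x ... j t = x_{t+1}^{(j)} for j \<ge> 1.\<close>
definition spider_x ::
  "(nat \<Rightarrow> 'a::euclidean_space \<Rightarrow> 'a) \<Rightarrow> nat \<Rightarrow> (nat \<Rightarrow> real) \<Rightarrow> (nat \<Rightarrow> real) \<Rightarrow> ('a \<Rightarrow> 'a)
   \<Rightarrow> real \<Rightarrow> nat \<Rightarrow> (nat \<Rightarrow> nat set) \<Rightarrow> (nat \<Rightarrow> nat \<Rightarrow> nat set) \<Rightarrow> 'a \<Rightarrow> nat \<Rightarrow> nat \<Rightarrow> 'a" where
  "spider_x g n p p' prox \<eta> m outS inS x1 j t =
     (let x0 = spider_outer g n p p' prox \<eta> m outS inS x1 (j - 1)
      in fst (snd (spider_inner g n p prox \<eta> (inS j) x0 (spider_V0 g n p' (outS j) x0) t)))"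

definition spider_samples ::
  "nat set pmf \<Rightarrow> nat set pmf \<Rightarrow> nat \<Rightarrow> nat \<Rightarrow> ((nat \<Rightarrow> nat set) \<times> (nat \<times> nat \<Rightarrow> nat set)) pmf" where
  "spider_samples Sout Sin J m =
     pair_pmf (Pi_pmf {1..J} {} (\<lambda>_. Sout)) (Pi_pmf ({1..J} \<times> {1..m}) {} (\<lambda>_. Sin))"

end

theory Submission
  imports Defs
begin

lemma line_deriv:
  fixes \<phi> :: "'a::euclidean_space \<Rightarrow> real"
  assumes "\<And>z. GDERIV \<phi> z :> g z"
  shows "((\<lambda>t. \<phi> (x + t *\<^sub>R d)) has_real_derivative inner (g (x + t *\<^sub>R d)) d) (at t)"
proof -
  have l: "((\<lambda>t. x + t *\<^sub>R d) has_derivative (\<lambda>s. s *\<^sub>R d)) (at t)"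
    by (auto intro!: derivative_eq_intros)
  have "(\<phi> has_derivative (\<lambda>h. inner h (g (x + t *\<^sub>R d)))) (at (x + t *\<^sub>R d))"
    using assms by (simp add: gderiv_def)
  from has_derivative_compose[OF l this]
  have "((\<lambda>t. \<phi> (x + t *\<^sub>R d)) has_derivative (\<lambda>s. inner (s *\<^sub>R d) (g (x + t *\<^sub>R d)))) (at t)"
    by (simp add: o_def)
  then show ?thesis
    by (simp add: has_field_derivative_def inner_commute mult.commute[of _ "d \<bullet> _"] mult_commute_abs)
qed

lemma descent_bounds:
  fixes \<phi> :: "'a::euclidean_space \<Rightarrow> real"
  assumes gd: "\<And>z. GDERIV \<phi> z :> g z"
    and lip: "\<And>a b. norm (g a - g b) \<le> L * norm (a - b)"
  shows "\<bar>\<phi> y - \<phi> x - inner (g x) (y - x)\<bar> \<le> L / 2 * (norm (y - x))\<^sup>2"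
proof -
  define d where "d = y - x"
  have y: "y = x + 1 *\<^sub>R d" by (simp add: d_def)
  have key: "\<bar>inner (g (x + t *\<^sub>R d)) d - inner (g x) d\<bar> \<le> L * t * (norm d)\<^sup>2" if "0 \<le> t" for t
  proof -
    have "\<bar>inner (g (x + t *\<^sub>R d)) d - inner (g x) d\<bar> = \<bar>inner (g (x + t *\<^sub>R d) - g x) d\<bar>"
      by (simp add: inner_diff_left)
    also have "\<dots> \<le> norm (g (x + t *\<^sub>R d) - g x) * norm d"
      by (rule Cauchy_Schwarz_ineq2)
    also have "\<dots> \<le> (L * norm (t *\<^sub>R d)) * norm d"
      using lip[of "x + t *\<^sub>R d" x] by (intro mult_right_mono) auto
    also have "\<dots> = L * t * (norm d)\<^sup>2"
      using that by (simp add: power2_eq_square)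
    finally show ?thesis .
  qed
  define h1 where "h1 t = \<phi> (x + t *\<^sub>R d) - t * inner (g x) d - L / 2 * t\<^sup>2 * (norm d)\<^sup>2" for t
  define h2 where "h2 t = \<phi> (x + t *\<^sub>R d) - t * inner (g x) d + L / 2 * t\<^sup>2 * (norm d)\<^sup>2" for t
  have d1: "(h1 has_real_derivative (inner (g (x + t *\<^sub>R d)) d - inner (g x) d - L * t * (norm d)\<^sup>2)) (at t)" for t
    unfolding h1_def
    by (rule derivative_eq_intros line_deriv[OF gd] refl | simp)+
  have d2: "(h2 has_real_derivative (inner (g (x + t *\<^sub>R d)) d - inner (g x) d + L * t * (norm d)\<^sup>2)) (at t)" for t
    unfolding h2_def
    by (rule derivative_eq_intros line_deriv[OF gd] refl | simp)+
  have "h1 1 \<le> h1 0"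
  proof (rule DERIV_nonpos_imp_nonincreasing[of 0 1 h1])
    fix t :: real assume "0 \<le> t" "t \<le> 1"
    then show "\<exists>y. DERIV h1 t :> y \<and> y \<le> 0"
      using d1[of t] key[of t] by (intro exI[of _ "inner (g (x + t *\<^sub>R d)) d - inner (g x) d - L * t * (norm d)\<^sup>2"]) auto
  qed simp
  moreover have "h2 0 \<le> h2 1"
  proof (rule DERIV_nonneg_imp_nondecreasing[of 0 1 h2])
    fix t :: real assume "0 \<le> t" "t \<le> 1"
    then show "\<exists>y. DERIV h2 t :> y \<and> 0 \<le> y"
      using d2[of t] key[of t] by (intro exI[of _ "inner (g (x + t *\<^sub>R d)) d - inner (g x) d + L * t * (norm d)\<^sup>2"]) auto
  qed simp
  ultimately have "\<phi> y - \<phi> x - inner (g x) (y - x) \<le> L / 2 * (norm (y - x))\<^sup>2"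
     "-(L / 2 * (norm (y - x))\<^sup>2) \<le> \<phi> y - \<phi> x - inner (g x) (y - x)"
    unfolding h1_def h2_def by (simp_all add: y[symmetric] d_def)
  then show ?thesis by (intro abs_leI) linarith+
qed

lemma sos_identity:
  fixes u a d :: "'a::real_inner"
  assumes L: "L > 0"
  shows "2 * (norm u)\<^sup>2 + (2*A + 4*L) * (- inner u d + A/2 * (norm d)\<^sup>2
           - (inner a d / 2 + L/4 * (norm d)\<^sup>2 - (norm a)\<^sup>2 / (4*L)))
         - L * (A - 4*L) * (norm d)\<^sup>2 - (norm (u + a - A *\<^sub>R d))\<^sup>2
       = (norm (u - a - (2*L) *\<^sub>R d))\<^sup>2 + (A - 4*L) / (2*L) * (norm (a + L *\<^sub>R d))\<^sup>2
         + (norm (a - L *\<^sub>R d))\<^sup>2"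
proof -
  have e: "(norm (u + a - A *\<^sub>R d))\<^sup>2 = inner u u + inner a a + A*A*inner d d + 2*inner u a - 2*A*inner u d - 2*A*inner a d"
    "(norm (u - a - (2*L) *\<^sub>R d))\<^sup>2 = inner u u + inner a a + 4*L*L*inner d d - 2*inner u a - 4*L*inner u d + 4*L*inner a d"
    "(norm (a + L *\<^sub>R d))\<^sup>2 = inner a a + L*L*inner d d + 2*L*inner a d"
    "(norm (a - L *\<^sub>R d))\<^sup>2 = inner a a + L*L*inner d d - 2*L*inner a d"
    "(norm u)\<^sup>2 = inner u u" "(norm a)\<^sup>2 = inner a a" "(norm d)\<^sup>2 = inner d d"
    by (simp_all add: power2_norm_eq_inner inner_add_left inner_add_right inner_diff_left inner_diff_right inner_commute algebra_simps)
  show ?thesis unfolding e using L by (simp add: field_simps)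
qed

lemma interpolation:
  fixes \<phi> :: "'a::euclidean_space \<Rightarrow> real"
  assumes gd: "\<And>z. GDERIV \<phi> z :> g z"
    and lip: "\<And>a b. norm (g a - g b) \<le> L * norm (a - b)"
    and L: "L > 0"
  shows "\<phi> y - \<phi> x - inner (g x) (y - x) \<le> inner (g y - g x) (y - x) / 2 + L/4 * (norm (y - x))\<^sup>2 - (norm (g y - g x))\<^sup>2 / (4*L)"
proof -
  define d where "d = y - x"
  define a where "a = g y - g x"
  define z where "z = x + (1/2) *\<^sub>R d + (1/(2*L)) *\<^sub>R a"
  have up: "\<phi> z - \<phi> x - inner (g x) (z - x) \<le> L/2 * (norm (z - x))\<^sup>2"
    using abs_le_D1[OF descent_bounds[OF gd lip, of z x]] .
  have lo: "-(L/2 * (norm (z - y))\<^sup>2) \<le> \<phi> z - \<phi> y - inner (g y) (z - y)"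
    using abs_le_D2[OF descent_bounds[OF gd lip, of z y]] by linarith
  have zx: "z - x = (1/2) *\<^sub>R d + (1/(2*L)) *\<^sub>R a" by (simp add: z_def)
  have zy: "z - y = (-1/2) *\<^sub>R d + (1/(2*L)) *\<^sub>R a"
  proof -
    have h: "(1/2::real) *\<^sub>R d + (1/2::real) *\<^sub>R d = d"
      by (metis scaleR_left_distrib scaleR_one field_sum_of_halves)
    have "z - y = (1/2) *\<^sub>R d + (1/(2*L)) *\<^sub>R a - d" by (simp add: z_def d_def algebra_simps)
    also have "\<dots> = (1/2) *\<^sub>R d + (1/(2*L)) *\<^sub>R a - ((1/2::real) *\<^sub>R d + (1/2::real) *\<^sub>R d)"
      by (simp only: h)
    also have "\<dots> = (-1/2) *\<^sub>R d + (1/(2*L)) *\<^sub>R a" by (simp add: algebra_simps)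
    finally show ?thesis .
  qed
  have gy: "g y = g x + a" by (simp add: a_def)
  have "\<phi> y - \<phi> x - inner (g x) d \<le> inner (g x) (z - x) - inner (g y) (z - y) - inner (g x) d + L/2 * ((norm (z - x))\<^sup>2 + (norm (z - y))\<^sup>2)"
    using up lo by (simp add: algebra_simps)
  also have "\<dots> = inner a d / 2 + L/4 * (norm d)\<^sup>2 - (norm a)\<^sup>2 / (4*L)"
    unfolding zx zy gy using L
    by (simp add: power2_norm_eq_inner inner_add_left inner_add_right inner_diff_left inner_diff_right inner_commute field_simps)
  finally show ?thesis by (simp add: d_def a_def)
qed

lemma frechet_from_quadratic:
  fixes F :: "'a::euclidean_space \<Rightarrow> real"
  assumes K: "K \<ge> 0" and q: "\<And>y. F y - F x - inner v (y - x) \<ge> - K * (norm (y - x))\<^sup>2"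
  shows "v \<in> frechet_subdiff F x"
  unfolding frechet_subdiff_def
proof (simp, subst le_Liminf_iff, intro allI impI)
  fix c :: ereal assume c: "c < 0"
  show "\<forall>\<^sub>F y in at x. c < ereal ((F y - F x - inner v (y - x)) / norm (y - x))"
  proof (cases c)
    case (real c')
    with c have c': "c' < 0" by simp
    define e where "e = - c' / (K + 1)"
    have e: "e > 0" unfolding e_def using c' K by (intro divide_pos_pos) auto
    have "\<forall>\<^sub>F y in at x. c' < (F y - F x - inner v (y - x)) / norm (y - x)"
      unfolding eventually_at
    proof (intro exI[of _ e] conjI e ballI impI allI)
      fix y assume y: "y \<noteq> x \<and> dist y x < e"
      then have np: "norm (y - x) > 0" by simp
      have ne: "norm (y - x) < e" using y by (simp add: dist_norm)
      have "c' < - K * norm (y - x)"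
      proof -
        have "K * norm (y - x) \<le> K * e" using ne K by (intro mult_left_mono) auto
        also have "K * e < - c'" using c' K by (simp add: e_def field_simps)
        finally show ?thesis by simp
      qed
      also have "- K * norm (y - x) = (- K * (norm (y - x))\<^sup>2) / norm (y - x)"
        using np by (simp add: power2_eq_square)
      also have "\<dots> \<le> (F y - F x - inner v (y - x)) / norm (y - x)"
        using q[of y] np by (intro divide_right_mono) auto
      finally show "c' < (F y - F x - inner v (y - x)) / norm (y - x)" .
    qed
    then show ?thesis by eventually_elim (simp add: real)
  next
    case PInf with c show ?thesis by simp
  next
    case MInf then show ?thesis by simp
  qed
qed

lemma step_ineq:
  fixes fa :: "'a::euclidean_space \<Rightarrow> real"
  assumes gd: "\<And>z. GDERIV fa z :> gf z"
    and lip: "\<And>a b. norm (gf a - gf b) \<le> L * norm (a - b)"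
    and L: "L > 0" and A: "A \<ge> 4 * L"
    and xn: "xn \<in> prox_set r (1/A) (x - (1/A) *\<^sub>R V)"
  shows "(infdist 0 (frechet_subdiff (\<lambda>z. fa z + r z) xn))\<^sup>2
         \<le> 2 * (norm (gf x - V))\<^sup>2 + (2*A + 4*L) * ((fa x + r x) - (fa xn + r xn))
            - L * (A - 4*L) * (norm (xn - x))\<^sup>2"
proof -
  have Apos: "A > 0" using L A by linarith
  define y0 where "y0 = x - (1/A) *\<^sub>R V"
  have pr: "A/2 * (norm (xn - y0))\<^sup>2 + r xn \<le> A/2 * (norm (z - y0))\<^sup>2 + r z" for z
    using xn unfolding prox_set_def y0_def by simp
  define u where "u = gf x - V"
  define a where "a = gf xn - gf x"
  define d where "d = xn - x"
  define v where "v = gf xn - A *\<^sub>R (xn - y0)"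
  have xny0: "xn - y0 = d + (1/A) *\<^sub>R V" by (simp add: y0_def d_def algebra_simps)
  have v: "v = u + a - A *\<^sub>R d"
    using Apos by (simp add: v_def xny0 u_def a_def scaleR_add_right algebra_simps)
  have "v \<in> frechet_subdiff (\<lambda>z. fa z + r z) xn"
  proof (rule frechet_from_quadratic[where K = "L/2 + A/2"])
    show "0 \<le> L/2 + A/2" using L Apos by simp
    fix z
    have r1: "r z - r xn \<ge> A/2 * ((norm (xn - y0))\<^sup>2 - (norm (z - y0))\<^sup>2)"
      using pr[of z] by (simp add: algebra_simps)
    have id: "(norm (z - y0))\<^sup>2 = (norm (z - xn))\<^sup>2 + 2 * inner (z - xn) (xn - y0) + (norm (xn - y0))\<^sup>2"
    proof -
      have "z - y0 = (z - xn) + (xn - y0)" by simp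
      then show ?thesis
        by (simp only: power2_norm_eq_inner inner_add_left inner_add_right inner_commute[of "xn - y0" "z - xn"])
    qed
    have f1: "fa z - fa xn - inner (gf xn) (z - xn) \<ge> - (L/2 * (norm (z - xn))\<^sup>2)"
      using abs_le_D2[OF descent_bounds[OF gd lip, of z xn]] by linarith
    have "inner v (z - xn) = inner (gf xn) (z - xn) - A * inner (z - xn) (xn - y0)"
      by (simp add: v_def inner_diff_left inner_diff_right inner_commute algebra_simps)
    then show "fa z + r z - (fa xn + r xn) - inner v (z - xn) \<ge> - (L/2 + A/2) * (norm (z - xn))\<^sup>2"
      using r1 id f1 by (simp add: algebra_simps)
  qed
  then have idv: "infdist 0 (frechet_subdiff (\<lambda>z. fa z + r z) xn) \<le> norm v"
    using infdist_le[of v _ 0] by simp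
  have sq: "(infdist 0 (frechet_subdiff (\<lambda>z. fa z + r z) xn))\<^sup>2 \<le> (norm v)\<^sup>2"
    using idv infdist_nonneg by (intro power_mono) auto
  have r2: "r xn - r x \<le> A/2 * ((norm (x - y0))\<^sup>2 - (norm (xn - y0))\<^sup>2)"
    using pr[of x] by (simp add: algebra_simps)
  have nx: "(norm (x - y0))\<^sup>2 = (1/A)^2 * (norm V)\<^sup>2"
    by (simp add: y0_def power_divide power2_abs)
  have nxn: "(norm (xn - y0))\<^sup>2 = (norm d)\<^sup>2 + 2 * (1/A) * inner d V + (1/A)^2 * (norm V)\<^sup>2"
    unfolding xny0 power2_norm_eq_inner by (simp add: inner_add_left inner_add_right inner_commute power2_eq_square)
  have r3: "r xn - r x \<le> - (A/2) * (norm d)\<^sup>2 - inner d V"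
  proof -
    have "A/2 * ((norm (x - y0))\<^sup>2 - (norm (xn - y0))\<^sup>2) = - (A/2) * (norm d)\<^sup>2 - inner d V"
      using Apos unfolding nx nxn by (simp add: field_simps)
    then show ?thesis using r2 by linarith
  qed
  have f2: "fa xn - fa x - inner (gf x) d \<le> inner a d / 2 + L/4 * (norm d)\<^sup>2 - (norm a)\<^sup>2 / (4*L)"
    using interpolation[OF gd lip L, of xn x] by (simp add: a_def d_def)
  have dec: "(fa xn + r xn) - (fa x + r x) \<le> inner u d - A/2 * (norm d)\<^sup>2 + (inner a d / 2 + L/4 * (norm d)\<^sup>2 - (norm a)\<^sup>2 / (4*L))"
    using r3 f2 by (simp add: u_def inner_diff_left inner_commute algebra_simps)
  have lam: "2*A + 4*L \<ge> 0" using L Apos by simp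
  have "(norm v)\<^sup>2 \<le> 2 * (norm u)\<^sup>2 + (2*A + 4*L) * (- inner u d + A/2 * (norm d)\<^sup>2
           - (inner a d / 2 + L/4 * (norm d)\<^sup>2 - (norm a)\<^sup>2 / (4*L))) - L * (A - 4*L) * (norm d)\<^sup>2"
  proof -
    have "0 \<le> (norm (u - a - (2*L) *\<^sub>R d))\<^sup>2 + (A - 4*L) / (2*L) * (norm (a + L *\<^sub>R d))\<^sup>2
         + (norm (a - L *\<^sub>R d))\<^sup>2"
      using A L by (intro add_nonneg_nonneg mult_nonneg_nonneg) auto
    then show ?thesis using sos_identity[OF L, of u A d a] unfolding v by linarith
  qed
  also have "\<dots> \<le> 2 * (norm u)\<^sup>2 + (2*A + 4*L) * ((fa x + r x) - (fa xn + r xn)) - L * (A - 4*L) * (norm d)\<^sup>2"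
    using mult_left_mono[OF dec lam] by (simp add: algebra_simps)
  finally show ?thesis using sq by (simp add: u_def d_def)
qed

lemma E_fin:
  fixes h :: "'b \<Rightarrow> real"
  assumes "finite (set_pmf M)"
  shows "measure_pmf.expectation M h = (\<Sum>x\<in>set_pmf M. pmf M x * h x)"
  using assms by (subst integral_measure_pmf[of "set_pmf M"]) auto

lemma prob_fin:
  assumes "finite (set_pmf M)"
  shows "measure_pmf.prob M X = (\<Sum>x\<in>set_pmf M. pmf M x * (if x \<in> X then 1 else 0))"
proof -
  have "measure_pmf.prob M X = measure_pmf.prob M (X \<inter> set_pmf M)"
    by (simp add: measure_Int_set_pmf)
  also have "\<dots> = sum (pmf M) (X \<inter> set_pmf M)"
    using assms by (intro measure_measure_pmf_finite) auto
  also have "\<dots> = sum (pmf M) (set_pmf M \<inter> X)" by (simp add: Int_commute)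
  also have "\<dots> = (\<Sum>x\<in>set_pmf M. if x \<in> X then pmf M x else 0)"
    using assms by (rule sum.inter_restrict)
  also have "\<dots> = (\<Sum>x\<in>set_pmf M. pmf M x * (if x \<in> X then 1 else 0))"
    by (intro sum.cong) auto
  finally show ?thesis .
qed

definition ind :: "nat \<Rightarrow> nat set \<Rightarrow> real" where "ind i A = (if i \<in> A then 1 else 0)"

lemma finite_set_pmf_sampling:
  assumes "sampling_on n S" shows "finite (set_pmf S)"
  using assms unfolding sampling_on_def by (rule finite_subset) auto

lemma marg_sum:
  assumes "sampling_on n S"
  shows "marg S i = (\<Sum>A\<in>set_pmf S. pmf S A * ind i A)"
  unfolding marg_def ind_def by (subst prob_fin[OF finite_set_pmf_sampling[OF assms]]) simp

lemma pairprob_sum: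
  assumes "sampling_on n S"
  shows "pairprob S i j = (\<Sum>A\<in>set_pmf S. pmf S A * (ind i A * ind j A))"
  unfolding pairprob_def ind_def by (subst prob_fin[OF finite_set_pmf_sampling[OF assms]]) (intro sum.cong, auto)

lemma sum_as_ind:
  fixes w :: "nat \<Rightarrow> 'a::real_vector"
  assumes "A \<subseteq> {..<n}"
  shows "(\<Sum>i\<in>A. w i) = (\<Sum>i<n. ind i A *\<^sub>R w i)"
proof -
  have "(\<Sum>i<n. ind i A *\<^sub>R w i) = (\<Sum>i<n. if i \<in> A then w i else 0)"
    by (intro sum.cong) (auto simp: ind_def)
  also have "\<dots> = (\<Sum>i\<in>{..<n} \<inter> A. w i)"
    by (rule sum.inter_restrict[symmetric]) simp
  also have "{..<n} \<inter> A = A" using assms by auto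
  finally show ?thesis by simp
qed

lemma norm_sq_expand:
  fixes c :: "'a::real_inner" and w :: "nat \<Rightarrow> 'a"
  shows "(norm (c - (\<Sum>i<n. t i *\<^sub>R w i)))\<^sup>2
     = (norm c)\<^sup>2 - 2 * (\<Sum>i<n. t i * inner c (w i)) + (\<Sum>i<n. \<Sum>j<n. t i * t j * inner (w i) (w j))"
proof -
  have "(norm (c - (\<Sum>i<n. t i *\<^sub>R w i)))\<^sup>2 = inner c c - 2 * inner c (\<Sum>i<n. t i *\<^sub>R w i)
        + inner (\<Sum>i<n. t i *\<^sub>R w i) (\<Sum>j<n. t j *\<^sub>R w j)"
    by (simp add: power2_norm_eq_inner inner_diff_left inner_diff_right inner_commute)
  also have "inner c (\<Sum>i<n. t i *\<^sub>R w i) = (\<Sum>i<n. t i * inner c (w i))"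
    by (simp add: inner_sum_right)
  also have "inner (\<Sum>i<n. t i *\<^sub>R w i) (\<Sum>j<n. t j *\<^sub>R w j) = (\<Sum>i<n. \<Sum>j<n. t i * t j * inner (w i) (w j))"
  proof -
    have "inner (\<Sum>i<n. t i *\<^sub>R w i) (\<Sum>j<n. t j *\<^sub>R w j) = (\<Sum>i<n. inner (t i *\<^sub>R w i) (\<Sum>j<n. t j *\<^sub>R w j))"
      by (rule inner_sum_left)
    also have "\<dots> = (\<Sum>i<n. \<Sum>j<n. inner (t i *\<^sub>R w i) (t j *\<^sub>R w j))"
      by (simp only: inner_sum_right)
    finally show ?thesis by (simp add: mult_ac)
  qed
  finally show ?thesis by (simp add: power2_norm_eq_inner)
qed

lemma eso_vector:
  fixes w :: "nat \<Rightarrow> 'a::euclidean_space"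
  assumes "eso n S v"
  shows "(\<Sum>i<n. \<Sum>j<n. (pairprob S i j - marg S i * marg S j) * inner (w i) (w j))
         \<le> (\<Sum>i<n. marg S i * v i * (norm (w i))\<^sup>2)"
proof -
  have e1: "inner (w i) (w j) = (\<Sum>b\<in>Basis. (w i \<bullet> b) * (w j \<bullet> b))" for i j
    by (rule euclidean_inner)
  have e2: "(norm (w i))\<^sup>2 = (\<Sum>b\<in>Basis. (w i \<bullet> b)\<^sup>2)" for i
  proof -
    have "(norm (w i))\<^sup>2 = inner (w i) (w i)" by (rule power2_norm_eq_inner)
    also have "\<dots> = (\<Sum>b\<in>Basis. (w i \<bullet> b) * (w i \<bullet> b))" by (rule euclidean_inner)
    finally show ?thesis by (simp add: power2_eq_square)
  qed
  have "(\<Sum>i<n. \<Sum>j<n. (pairprob S i j - marg S i * marg S j) * inner (w i) (w j))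
      = (\<Sum>i<n. \<Sum>j<n. \<Sum>b\<in>Basis. (pairprob S i j - marg S i * marg S j) * (w i \<bullet> b) * (w j \<bullet> b))"
    by (simp only: e1 sum_distrib_left mult.assoc)
  also have "\<dots> = (\<Sum>b\<in>Basis. \<Sum>i<n. \<Sum>j<n. (pairprob S i j - marg S i * marg S j) * (w i \<bullet> b) * (w j \<bullet> b))"
  proof -
    have "(\<Sum>i<n. \<Sum>j<n. \<Sum>b\<in>Basis. (pairprob S i j - marg S i * marg S j) * (w i \<bullet> b) * (w j \<bullet> b))
        = (\<Sum>i<n. \<Sum>b\<in>Basis. \<Sum>j<n. (pairprob S i j - marg S i * marg S j) * (w i \<bullet> b) * (w j \<bullet> b))"
      by (intro sum.cong refl) (rule sum.swap)
    also have "\<dots> = (\<Sum>b\<in>Basis. \<Sum>i<n. \<Sum>j<n. (pairprob S i j - marg S i * marg S j) * (w i \<bullet> b) * (w j \<bullet> b))"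
      by (rule sum.swap)
    finally show ?thesis .
  qed
  also have "\<dots> \<le> (\<Sum>b\<in>Basis. \<Sum>i<n. marg S i * v i * (w i \<bullet> b)\<^sup>2)"
  proof (rule sum_mono)
    fix b :: 'a
    show "(\<Sum>i<n. \<Sum>j<n. (pairprob S i j - marg S i * marg S j) * (w i \<bullet> b) * (w j \<bullet> b))
          \<le> (\<Sum>i<n. marg S i * v i * (w i \<bullet> b)\<^sup>2)"
      using assms unfolding eso_def by (rule allE[of _ "\<lambda>i. w i \<bullet> b"])
  qed
  also have "\<dots> = (\<Sum>i<n. \<Sum>b\<in>Basis. marg S i * v i * (w i \<bullet> b)\<^sup>2)"
    by (rule sum.swap)
  also have "\<dots> = (\<Sum>i<n. marg S i * v i * (norm (w i))\<^sup>2)"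
    by (simp only: e2 sum_distrib_left)
  finally show ?thesis .
qed

lemma sum_pmf_lin1:
  assumes fin: "finite (set_pmf S)"
  shows "(\<Sum>A\<in>set_pmf S. pmf S A * (\<Sum>i<n. t i A * \<alpha> i)) = (\<Sum>i<n. (\<Sum>A\<in>set_pmf S. pmf S A * t i A) * \<alpha> i)"
proof -
  have "(\<Sum>A\<in>set_pmf S. pmf S A * (\<Sum>i<n. t i A * \<alpha> i)) = (\<Sum>A\<in>set_pmf S. \<Sum>i<n. pmf S A * t i A * \<alpha> i)"
    by (simp add: sum_distrib_left mult.assoc)
  also have "\<dots> = (\<Sum>i<n. \<Sum>A\<in>set_pmf S. pmf S A * t i A * \<alpha> i)" by (rule sum.swap)
  also have "\<dots> = (\<Sum>i<n. (\<Sum>A\<in>set_pmf S. pmf S A * t i A) * \<alpha> i)" by (simp add: sum_distrib_right)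
  finally show ?thesis .
qed

lemma sum_pmf_lin2:
  assumes fin: "finite (set_pmf S)"
  shows "(\<Sum>A\<in>set_pmf S. pmf S A * (\<Sum>i<n. \<Sum>j<n. t i A * t j A * \<beta> i j))
       = (\<Sum>i<n. \<Sum>j<n. (\<Sum>A\<in>set_pmf S. pmf S A * (t i A * t j A)) * \<beta> i j)"
proof -
  have "(\<Sum>A\<in>set_pmf S. pmf S A * (\<Sum>i<n. \<Sum>j<n. t i A * t j A * \<beta> i j))
      = (\<Sum>A\<in>set_pmf S. \<Sum>i<n. \<Sum>j<n. pmf S A * (t i A * t j A) * \<beta> i j)"
    by (simp add: sum_distrib_left mult.assoc)
  also have "\<dots> = (\<Sum>i<n. \<Sum>A\<in>set_pmf S. \<Sum>j<n. pmf S A * (t i A * t j A) * \<beta> i j)" by (rule sum.swap)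
  also have "\<dots> = (\<Sum>i<n. \<Sum>j<n. \<Sum>A\<in>set_pmf S. pmf S A * (t i A * t j A) * \<beta> i j)"
    by (intro sum.cong refl) (rule sum.swap)
  also have "\<dots> = (\<Sum>i<n. \<Sum>j<n. (\<Sum>A\<in>set_pmf S. pmf S A * (t i A * t j A)) * \<beta> i j)"
    by (simp add: sum_distrib_right)
  finally show ?thesis .
qed

lemma sampling_var:
  fixes w :: "nat \<Rightarrow> 'a::euclidean_space" and u :: 'a
  assumes ps: "proper_sampling n S" and es: "eso n S v"
  shows "measure_pmf.expectation S (\<lambda>A. (norm (u + (\<Sum>i<n. marg S i *\<^sub>R w i) - (\<Sum>i\<in>A. w i)))\<^sup>2)
         \<le> (norm u)\<^sup>2 + (\<Sum>i<n. marg S i * v i * (norm (w i))\<^sup>2)"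
proof -
  have so: "sampling_on n S" using ps by (simp add: proper_sampling_def)
  have fin: "finite (set_pmf S)" by (rule finite_set_pmf_sampling[OF so])
  define \<mu> where "\<mu> = (\<Sum>i<n. marg S i *\<^sub>R w i)"
  define c where "c = u + \<mu>"
  define K where "K = (norm c)\<^sup>2"
  define X where "X A = (\<Sum>i<n. ind i A * inner c (w i))" for A
  define Y where "Y A = (\<Sum>i<n. \<Sum>j<n. ind i A * ind j A * inner (w i) (w j))" for A
  have h: "(norm (u + \<mu> - (\<Sum>i\<in>A. w i)))\<^sup>2 = K - 2 * X A + Y A" if "A \<in> set_pmf S" for A
  proof -
    have "A \<subseteq> {..<n}" using so that by (auto simp: sampling_on_def)
    then have "(\<Sum>i\<in>A. w i) = (\<Sum>i<n. ind i A *\<^sub>R w i)" by (rule sum_as_ind)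
    then show ?thesis unfolding K_def X_def Y_def c_def
      by (simp add: norm_sq_expand diff_diff_eq2)
  qed
  have "measure_pmf.expectation S (\<lambda>A. (norm (u + \<mu> - (\<Sum>i\<in>A. w i)))\<^sup>2)
      = (\<Sum>A\<in>set_pmf S. pmf S A * (norm (u + \<mu> - (\<Sum>i\<in>A. w i)))\<^sup>2)"
    by (rule E_fin[OF fin])
  also have "\<dots> = (\<Sum>A\<in>set_pmf S. pmf S A * (K - 2 * X A + Y A))"
    by (intro sum.cong refl) (simp add: h)
  also have "\<dots> = (\<Sum>A\<in>set_pmf S. pmf S A) * K - 2 * (\<Sum>A\<in>set_pmf S. pmf S A * X A) + (\<Sum>A\<in>set_pmf S. pmf S A * Y A)"
    by (simp add: algebra_simps sum.distrib sum_subtractf sum_distrib_left sum_distrib_right)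
  also have "(\<Sum>A\<in>set_pmf S. pmf S A) = 1"
    using fin by (intro sum_pmf_eq_1) auto
  also have "(\<Sum>A\<in>set_pmf S. pmf S A * X A) = (\<Sum>i<n. marg S i * inner c (w i))"
    unfolding X_def by (subst sum_pmf_lin1[OF fin]) (simp add: marg_sum[OF so])
  also have "(\<Sum>A\<in>set_pmf S. pmf S A * Y A) = (\<Sum>i<n. \<Sum>j<n. pairprob S i j * inner (w i) (w j))"
    unfolding Y_def by (subst sum_pmf_lin2[OF fin]) (simp add: pairprob_sum[OF so])
  also have "(\<Sum>i<n. marg S i * inner c (w i)) = inner c \<mu>"
    by (simp add: \<mu>_def inner_sum_right)
  finally have E: "measure_pmf.expectation S (\<lambda>A. (norm (u + \<mu> - (\<Sum>i\<in>A. w i)))\<^sup>2)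
      = K - 2 * inner c \<mu> + (\<Sum>i<n. \<Sum>j<n. pairprob S i j * inner (w i) (w j))" by simp
  have mu2: "(norm \<mu>)\<^sup>2 = (\<Sum>i<n. \<Sum>j<n. marg S i * marg S j * inner (w i) (w j))"
    using norm_sq_expand[of 0 "marg S" w n] by (simp add: \<mu>_def)
  have K: "K - 2 * inner c \<mu> = (norm u)\<^sup>2 - (norm \<mu>)\<^sup>2"
    unfolding K_def c_def
    by (simp add: power2_norm_eq_inner inner_add_left inner_add_right inner_commute)
  have "(\<Sum>i<n. \<Sum>j<n. pairprob S i j * inner (w i) (w j)) - (norm \<mu>)\<^sup>2
      = (\<Sum>i<n. \<Sum>j<n. (pairprob S i j - marg S i * marg S j) * inner (w i) (w j))"
    unfolding mu2 by (simp add: sum_subtractf left_diff_distrib)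
  also have "\<dots> \<le> (\<Sum>i<n. marg S i * v i * (norm (w i))\<^sup>2)"
    by (rule eso_vector[OF es])
  finally show ?thesis using E K by (simp add: \<mu>_def)
qed

lemma E_pair:
  fixes h :: "'a \<times> 'b \<Rightarrow> real"
  assumes fp: "finite (set_pmf p)" and fq: "finite (set_pmf q)"
  shows "measure_pmf.expectation (pair_pmf p q) h
       = measure_pmf.expectation p (\<lambda>a. measure_pmf.expectation q (\<lambda>b. h (a, b)))"
proof -
  have fpq: "finite (set_pmf (pair_pmf p q))" using fp fq by (simp add: set_pair_pmf)
  have "measure_pmf.expectation (pair_pmf p q) h = (\<Sum>x\<in>set_pmf p \<times> set_pmf q. pmf (pair_pmf p q) x * h x)"
    by (subst E_fin[OF fpq]) (simp add: set_pair_pmf)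
  also have "\<dots> = (\<Sum>a\<in>set_pmf p. \<Sum>b\<in>set_pmf q. pmf p a * (pmf q b * h (a, b)))"
  proof -
    have "(\<Sum>x\<in>set_pmf p \<times> set_pmf q. pmf (pair_pmf p q) x * h x)
        = (\<Sum>(a,b)\<in>set_pmf p \<times> set_pmf q. pmf p a * (pmf q b * h (a, b)))"
      by (intro sum.cong) (auto simp: pmf_pair)
    then show ?thesis by (simp only: sum.cartesian_product)
  qed
  also have "\<dots> = (\<Sum>a\<in>set_pmf p. pmf p a * (\<Sum>b\<in>set_pmf q. pmf q b * h (a, b)))"
    by (simp add: sum_distrib_left)
  also have "\<dots> = measure_pmf.expectation p (\<lambda>a. measure_pmf.expectation q (\<lambda>b. h (a, b)))"
    by (simp add: E_fin[OF fp] E_fin[OF fq])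
  finally show ?thesis .
qed

lemma E_swap:
  fixes h :: "'a \<Rightarrow> 'b \<Rightarrow> real"
  assumes fp: "finite (set_pmf p)" and fq: "finite (set_pmf q)"
  shows "measure_pmf.expectation p (\<lambda>a. measure_pmf.expectation q (\<lambda>b. h a b))
       = measure_pmf.expectation q (\<lambda>b. measure_pmf.expectation p (\<lambda>a. h a b))"
  by (simp add: E_fin[OF fp] E_fin[OF fq] sum_distrib_left sum.swap[of _ "set_pmf p"] mult.left_commute)

lemma E_const:
  assumes fp: "finite (set_pmf p)"
  shows "measure_pmf.expectation p (\<lambda>a. c) = (c::real)"
proof -
  have "(\<Sum>x\<in>set_pmf p. pmf p x) = 1" using fp by (intro sum_pmf_eq_1) auto
  then show ?thesis by (simp add: E_fin[OF fp] sum_distrib_right[symmetric])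
qed

lemma finite_Pi_pmf:
  assumes "finite I" "\<And>i. i \<in> I \<Longrightarrow> finite (set_pmf (D i))"
  shows "finite (set_pmf (Pi_pmf I d D))"
  using assms by (intro finite_subset[OF set_Pi_pmf_subset'] finite_PiE_dflt) auto

lemma Pi_split:
  fixes \<psi> :: "('i \<Rightarrow> 'x) \<Rightarrow> real"
  assumes I: "finite I" and k: "k \<in> I" and fD: "\<And>i. i \<in> I \<Longrightarrow> finite (set_pmf (D i))"
  shows "measure_pmf.expectation (Pi_pmf I d D) \<psi>
       = measure_pmf.expectation (D k) (\<lambda>s. measure_pmf.expectation (Pi_pmf (I - {k}) d D) (\<lambda>om. \<psi> (om(k := s))))"
proof -
  have Ieq: "I = insert k (I - {k})" using k by auto
  have f1: "finite (set_pmf (D k))" using fD k by auto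
  have f2: "finite (set_pmf (Pi_pmf (I - {k}) d D))" using I fD by (intro finite_Pi_pmf) auto
  have "Pi_pmf I d D = map_pmf (\<lambda>(y,f). f(k:=y)) (pair_pmf (D k) (Pi_pmf (I - {k}) d D))"
    by (subst Ieq, rule Pi_pmf_insert) (use I in auto)
  then have "measure_pmf.expectation (Pi_pmf I d D) \<psi>
      = measure_pmf.expectation (pair_pmf (D k) (Pi_pmf (I - {k}) d D)) (\<lambda>(y,f). \<psi> (f(k:=y)))"
    by (simp add: case_prod_unfold)
  also have "\<dots> = measure_pmf.expectation (D k) (\<lambda>s. measure_pmf.expectation (Pi_pmf (I - {k}) d D) (\<lambda>om. \<psi> (om(k := s))))"
    by (subst E_pair[OF f1 f2]) simp
  finally show ?thesis .
qed

lemma indep_Pi: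
  fixes \<phi> :: "'h \<Rightarrow> 'x \<Rightarrow> real"
  assumes I: "finite I" and k: "k \<in> I" and fD: "\<And>i. i \<in> I \<Longrightarrow> finite (set_pmf (D i))"
    and hinv: "\<And>om s. h (om(k := s)) = h om"
  shows "measure_pmf.expectation (Pi_pmf I d D) (\<lambda>om. \<phi> (h om) (om k))
       = measure_pmf.expectation (Pi_pmf I d D) (\<lambda>om. measure_pmf.expectation (D k) (\<lambda>s. \<phi> (h om) s))"
proof -
  have f1: "finite (set_pmf (D k))" using fD k by auto
  have f2: "finite (set_pmf (Pi_pmf (I - {k}) d D))" using I fD by (intro finite_Pi_pmf) auto
  have "measure_pmf.expectation (Pi_pmf I d D) (\<lambda>om. \<phi> (h om) (om k))
      = measure_pmf.expectation (D k) (\<lambda>s. measure_pmf.expectation (Pi_pmf (I - {k}) d D) (\<lambda>om. \<phi> (h om) s))"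
    by (subst Pi_split[OF I k fD]) (simp_all add: hinv)
  also have "\<dots> = measure_pmf.expectation (Pi_pmf (I - {k}) d D) (\<lambda>om. measure_pmf.expectation (D k) (\<lambda>s. \<phi> (h om) s))"
    by (rule E_swap[OF f1 f2])
  also have "\<dots> = measure_pmf.expectation (D k) (\<lambda>s'. measure_pmf.expectation (Pi_pmf (I - {k}) d D) (\<lambda>om. measure_pmf.expectation (D k) (\<lambda>s. \<phi> (h om) s)))"
    by (rule E_const[OF f1, symmetric])
  also have "\<dots> = measure_pmf.expectation (Pi_pmf I d D) (\<lambda>om. measure_pmf.expectation (D k) (\<lambda>s. \<phi> (h om) s))"
    by (subst Pi_split[OF I k fD]) (simp_all add: hinv)
  finally show ?thesis .
qed

lemma indep_fst:
  fixes \<phi> :: "'h \<Rightarrow> 'x \<Rightarrow> real"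
  assumes I: "finite I" and k: "k \<in> I" and fD: "\<And>i. i \<in> I \<Longrightarrow> finite (set_pmf (D i))"
    and f2: "finite (set_pmf P2)"
    and hinv: "\<And>o1 o2 s. h (o1(k := s), o2) = h (o1, o2)"
  shows "measure_pmf.expectation (pair_pmf (Pi_pmf I d D) P2) (\<lambda>om. \<phi> (h om) (fst om k))
       = measure_pmf.expectation (pair_pmf (Pi_pmf I d D) P2) (\<lambda>om. measure_pmf.expectation (D k) (\<lambda>s. \<phi> (h om) s))"
proof -
  have f1: "finite (set_pmf (Pi_pmf I d D))" using I fD by (intro finite_Pi_pmf) auto
  have fk: "finite (set_pmf (D k))" using fD k by auto
  have "measure_pmf.expectation (pair_pmf (Pi_pmf I d D) P2) (\<lambda>om. \<phi> (h om) (fst om k))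
      = measure_pmf.expectation (Pi_pmf I d D) (\<lambda>o1. (\<lambda>H s. measure_pmf.expectation P2 (\<lambda>o2. \<phi> (H o2) s)) (\<lambda>o2. h (o1, o2)) (o1 k))"
    by (simp add: E_pair[OF f1 f2])
  also have "\<dots> = measure_pmf.expectation (Pi_pmf I d D) (\<lambda>o1. measure_pmf.expectation (D k) (\<lambda>s. (\<lambda>H s. measure_pmf.expectation P2 (\<lambda>o2. \<phi> (H o2) s)) (\<lambda>o2. h (o1, o2)) s))"
  proof -
    have hinv': "(\<lambda>o2. h (o1(k := s), o2)) = (\<lambda>o2. h (o1, o2))" for o1 s
      by (simp add: hinv)
    show ?thesis
      apply (rule indep_Pi[OF I k, where h = "\<lambda>o1 o2. h (o1, o2)"])
       apply (erule fD)
      apply (rule hinv')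
      done
  qed
  also have "\<dots> = measure_pmf.expectation (Pi_pmf I d D) (\<lambda>o1. measure_pmf.expectation P2 (\<lambda>o2. measure_pmf.expectation (D k) (\<lambda>s. \<phi> (h (o1, o2)) s)))"
    by (simp add: E_swap[OF fk f2])
  also have "\<dots> = measure_pmf.expectation (pair_pmf (Pi_pmf I d D) P2) (\<lambda>om. measure_pmf.expectation (D k) (\<lambda>s. \<phi> (h om) s))"
    by (simp add: E_pair[OF f1 f2])
  finally show ?thesis .
qed

lemma indep_snd:
  fixes \<phi> :: "'h \<Rightarrow> 'x \<Rightarrow> real"
  assumes I: "finite I" and k: "k \<in> I" and fD: "\<And>i. i \<in> I \<Longrightarrow> finite (set_pmf (D i))"
    and f1: "finite (set_pmf P1)"
    and hinv: "\<And>o1 o2 s. h (o1, o2(k := s)) = h (o1, o2)"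
  shows "measure_pmf.expectation (pair_pmf P1 (Pi_pmf I d D)) (\<lambda>om. \<phi> (h om) (snd om k))
       = measure_pmf.expectation (pair_pmf P1 (Pi_pmf I d D)) (\<lambda>om. measure_pmf.expectation (D k) (\<lambda>s. \<phi> (h om) s))"
proof -
  have f2: "finite (set_pmf (Pi_pmf I d D))" using I fD by (intro finite_Pi_pmf) auto
  have eq: "measure_pmf.expectation (Pi_pmf I d D) (\<lambda>o2. \<phi> (h (o1, o2)) (o2 k))
      = measure_pmf.expectation (Pi_pmf I d D) (\<lambda>o2. measure_pmf.expectation (D k) (\<lambda>s. \<phi> (h (o1, o2)) s))" for o1
    apply (rule indep_Pi[OF I k, where h = "\<lambda>o2. h (o1, o2)"])
     apply (erule fD)
    apply (rule hinv)
    done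
  show ?thesis by (simp add: E_pair[OF f1 f2] eq)
qed

lemma inner_Suc_parts:
  shows "fst (spider_inner g n p prox \<eta> St x0 V0 (Suc k)) = fst (snd (spider_inner g n p prox \<eta> St x0 V0 k))"
    and "snd (snd (spider_inner g n p prox \<eta> St x0 V0 (Suc k)))
         = (\<Sum>i\<in>St (Suc k). (1 / (real n * p i)) *\<^sub>R (g i (fst (snd (spider_inner g n p prox \<eta> St x0 V0 k)))
              - g i (fst (spider_inner g n p prox \<eta> St x0 V0 k)))) + snd (snd (spider_inner g n p prox \<eta> St x0 V0 k))"
    and "fst (snd (spider_inner g n p prox \<eta> St x0 V0 (Suc k)))
         = prox (fst (snd (spider_inner g n p prox \<eta> St x0 V0 k)) - \<eta> *\<^sub>R snd (snd (spider_inner g n p prox \<eta> St x0 V0 (Suc k))))"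
  by (cases "spider_inner g n p prox \<eta> St x0 V0 k"; simp add: Let_def)+

lemma spider_inner_cong:
  assumes "\<And>i. 1 \<le> i \<Longrightarrow> i \<le> k \<Longrightarrow> St i = St' i"
  shows "spider_inner g n p prox \<eta> St x0 V0 k = spider_inner g n p prox \<eta> St' x0 V0 k"
  using assms
proof (induction k)
  case 0 then show ?case by simp
next
  case (Suc k)
  have "spider_inner g n p prox \<eta> St x0 V0 k = spider_inner g n p prox \<eta> St' x0 V0 k"
    using Suc.prems by (intro Suc.IH) auto
  moreover have "St (Suc k) = St' (Suc k)" using Suc.prems by auto
  ultimately show ?case by simp
qed

lemma spider_outer_cong:
  assumes "\<And>i. 1 \<le> i \<Longrightarrow> i \<le> k \<Longrightarrow> outS i = outS' i \<and> inS i = inS' i"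
  shows "spider_outer g n p p' prox \<eta> m outS inS x1 k = spider_outer g n p p' prox \<eta> m outS' inS' x1 k"
  using assms
proof (induction k)
  case 0 then show ?case by simp
next
  case (Suc k)
  have "spider_outer g n p p' prox \<eta> m outS inS x1 k = spider_outer g n p p' prox \<eta> m outS' inS' x1 k"
    using Suc.prems by (intro Suc.IH) auto
  moreover have "outS (Suc k) = outS' (Suc k)" "inS (Suc k) = inS' (Suc k)" using Suc.prems by auto
  ultimately show ?case by (simp add: Let_def)
qed

lemma E_add: "finite (set_pmf M) \<Longrightarrow> measure_pmf.expectation M (\<lambda>x. h1 x + h2 x) = measure_pmf.expectation M h1 + measure_pmf.expectation M (h2 :: _ \<Rightarrow> real)"
  by (simp add: E_fin sum.distrib algebra_simps)

lemma E_diff: "finite (set_pmf M) \<Longrightarrow> measure_pmf.expectation M (\<lambda>x. h1 x - h2 x) = measure_pmf.expectation M h1 - measure_pmf.expectation M (h2 :: _ \<Rightarrow> real)"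
  by (simp add: E_fin sum_subtractf algebra_simps)

lemma E_cmult: "finite (set_pmf M) \<Longrightarrow> measure_pmf.expectation M (\<lambda>x. c * h x) = c * measure_pmf.expectation M (h :: _ \<Rightarrow> real)"
  by (simp add: E_fin sum_distrib_left algebra_simps)

lemma E_sum: "finite (set_pmf M) \<Longrightarrow> measure_pmf.expectation M (\<lambda>x. \<Sum>i\<in>I. h i x) = (\<Sum>i\<in>I. measure_pmf.expectation M (h i :: _ \<Rightarrow> real))"
  by (simp add: E_fin sum_distrib_left sum.swap[of _ I])

lemma E_mono: "finite (set_pmf M) \<Longrightarrow> (\<And>x. x \<in> set_pmf M \<Longrightarrow> h1 x \<le> h2 x) \<Longrightarrow> measure_pmf.expectation M h1 \<le> measure_pmf.expectation M (h2 :: _ \<Rightarrow> real)"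
  by (simp add: E_fin) (intro sum_mono mult_left_mono, auto)

lemma E_nonneg: "finite (set_pmf M) \<Longrightarrow> (\<And>x. x \<in> set_pmf M \<Longrightarrow> 0 \<le> h x) \<Longrightarrow> 0 \<le> measure_pmf.expectation M (h :: _ \<Rightarrow> real)"
  using E_mono[of M "\<lambda>_. 0" h] E_const[of M 0] by simp

lemma eso_v_nonneg:
  assumes ps: "proper_sampling n S" and es: "eso n S v" and i: "i < n"
  shows "v i \<ge> 0"
proof -
  define z where "z k = (if k = i then 1 else 0 :: real)" for k
  have le: "(\<Sum>k<n. \<Sum>l<n. (pairprob S k l - marg S k * marg S l) * z k * z l) \<le> (\<Sum>k<n. marg S k * v k * (z k)\<^sup>2)"
    using es unfolding eso_def by (rule allE)
  have r: "(\<Sum>k<n. marg S k * v k * (z k)\<^sup>2) = marg S i * v i"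
  proof -
    have "(\<Sum>k<n. marg S k * v k * (z k)\<^sup>2) = (\<Sum>k<n. if k = i then marg S k * v k else 0)"
      by (intro sum.cong) (auto simp: z_def)
    also have "\<dots> = marg S i * v i" using i by simp
    finally show ?thesis .
  qed
  have l: "(\<Sum>k<n. \<Sum>l<n. (pairprob S k l - marg S k * marg S l) * z k * z l) = pairprob S i i - marg S i * marg S i"
  proof -
    have e2: "(\<Sum>l<n. (pairprob S k l - marg S k * marg S l) * z k * z l)
        = (if k = i then pairprob S i i - marg S i * marg S i else 0)" for k
    proof (cases "k = i")
      case True
      have "(\<Sum>l<n. (pairprob S k l - marg S k * marg S l) * z k * z l)
          = (\<Sum>l<n. if l = i then pairprob S i i - marg S i * marg S i else 0)"
        by (intro sum.cong) (auto simp: z_def True)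
      also have "\<dots> = pairprob S i i - marg S i * marg S i" using i by simp
      finally show ?thesis using True by simp
    next
      case False
      then show ?thesis by (simp add: z_def)
    qed
    show ?thesis using i by (simp add: e2)
  qed
  have *: "pairprob S i i - marg S i * marg S i \<le> marg S i * v i" using le l r by simp
  have pe: "pairprob S i i = marg S i" by (simp add: pairprob_def marg_def)
  have m1: "marg S i \<le> 1" by (simp add: marg_def)
  have mp: "marg S i > 0" using ps i by (simp add: proper_sampling_def)
  have "marg S i * (1 - marg S i) \<le> marg S i * v i" using * pe by (simp add: algebra_simps)
  then have "1 - marg S i \<le> v i" using mp by (simp add: mult_le_cancel_left_pos)
  then show ?thesis using m1 by linarith
qed

lemma telescope_real:
  "(\<Sum>t\<in>{1..m}. (a t - a (Suc t))) = a 1 - a (Suc m :: nat) " for a :: "nat \<Rightarrow> real"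
  by (induction m) (auto simp: sum.atLeast_Suc_atMost_Suc_shift)

lemma epoch_sum:
  fixes U Dd a Dist :: "nat \<Rightarrow> real"
  assumes U0: "U 0 \<le> Q'" and Ustep: "\<And>t. t < m \<Longrightarrow> U (Suc t) \<le> U t + Q * Dd t"
    and D0: "Dd 0 = 0" and Dnn: "\<And>t. Dd t \<ge> 0" and Q: "Q \<ge> 0"
    and Dist: "\<And>t. 1 \<le> t \<Longrightarrow> t \<le> m \<Longrightarrow> Dist t \<le> 2 * U t + lam * (a t - a (Suc t)) - 2 * real m * Q * Dd t"
  shows "(\<Sum>t\<in>{1..m}. Dist t) \<le> 2 * real m * Q' + lam * (a 1 - a (Suc m))"
proof -
  have c1: "t \<le> m \<Longrightarrow> U t \<le> Q' + Q * (\<Sum>s<t. Dd s)" for t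
  proof (induction t)
    case 0 then show ?case using U0 by simp
  next
    case (Suc t)
    then have "U (Suc t) \<le> U t + Q * Dd t" by (intro Ustep) simp
    also have "\<dots> \<le> Q' + Q * (\<Sum>s<t. Dd s) + Q * Dd t" using Suc by simp
    finally show ?case by (simp add: algebra_simps)
  qed
  define SD where "SD = (\<Sum>s\<in>{1..m}. Dd s)"
  have c2: "(\<Sum>s<t. Dd s) \<le> SD" if "t \<le> m" for t
  proof -
    have "(\<Sum>s<t. Dd s) \<le> (\<Sum>s<Suc m. Dd s)"
      using that Dnn by (intro sum_mono2) auto
    also have "{..<Suc m} = insert 0 {1..m}" by auto
    also have "(\<Sum>s\<in>insert 0 {1..m}. Dd s) = SD" using D0 by (simp add: SD_def)
    finally show ?thesis .
  qed
  have "(\<Sum>t\<in>{1..m}. Dist t) \<le> (\<Sum>t\<in>{1..m}. 2 * (Q' + Q * SD) + lam * (a t - a (Suc t)) - 2 * real m * Q * Dd t)"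
  proof (rule sum_mono)
    fix t assume t: "t \<in> {1..m}"
    have "U t \<le> Q' + Q * SD" using c1[of t] c2[of t] t Q by (smt (verit) atLeastAtMost_iff mult_left_mono)
    then show "Dist t \<le> 2 * (Q' + Q * SD) + lam * (a t - a (Suc t)) - 2 * real m * Q * Dd t"
      using Dist[of t] t by simp
  qed
  also have "\<dots> = (\<Sum>t\<in>{1..m}. 2 * (Q' + Q * SD)) + (\<Sum>t\<in>{1..m}. lam * (a t - a (Suc t))) - (\<Sum>t\<in>{1..m}. 2 * real m * Q * Dd t)"
    by (simp only: sum.distrib sum_subtractf)
  also have "(\<Sum>t\<in>{1..m}. lam * (a t - a (Suc t))) = lam * (a 1 - a (Suc m))"
    by (subst sum_distrib_left[symmetric]) (rule arg_cong[where f="\<lambda>x. lam * x"], rule telescope_real)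
  also have "(\<Sum>t\<in>{1..m}. 2 * real m * Q * Dd t) = 2 * real m * Q * SD"
    by (simp add: sum_distrib_left SD_def)
  also have "(\<Sum>t\<in>{1..m}. 2 * (Q' + Q * SD)) = real m * (2 * (Q' + Q * SD))" by simp
  also have "real m * (2 * (Q' + Q * SD)) + lam * (a 1 - a (Suc m)) - 2 * real m * Q * SD = 2 * real m * Q' + lam * (a 1 - a (Suc m))"
    by (simp add: algebra_simps)
  finally show ?thesis .
qed

theorem theorem6p3:
  fixes n m J :: nat
    and f :: "nat \<Rightarrow> 'a::euclidean_space \<Rightarrow> real"
    and g :: "nat \<Rightarrow> 'a \<Rightarrow> 'a"
    and r :: "'a \<Rightarrow> real"
    and G L :: "nat \<Rightarrow> real"
    and Sout Sin :: "nat set pmf"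
    and v v' :: "nat \<Rightarrow> real"
    and prox :: "'a \<Rightarrow> 'a"
    and x1 xstar :: 'a
    and F :: "'a \<Rightarrow> real"
    and Lt Q Q' \<eta> :: real
  defines "F \<equiv> \<lambda>x. (1 / real n) * (\<Sum>i<n. f i x) + r x"
    and "Lt \<equiv> (1 / real n) * (\<Sum>i<n. L i)"
    and "Q \<equiv> (\<Sum>i<n. v i * (L i)\<^sup>2 / (marg Sin i * (real n)\<^sup>2))"
    and "Q' \<equiv> (\<Sum>i<n. v' i * (G i)\<^sup>2 / (marg Sout i * (real n)\<^sup>2))"
    and "\<eta> \<equiv> 1 / (4 * Lt + 2 * real m * Q / Lt)"
  assumes grad: "\<And>i x. i < n \<Longrightarrow> GDERIV (f i) x :> g i x"
    and bounded: "\<And>i x. i < n \<Longrightarrow> norm (g i x) \<le> G i"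
    and lipschitz: "\<And>i x y. i < n \<Longrightarrow> norm (g i x - g i y) \<le> L i * norm (x - y)"
    and prox_sel: "\<And>y. prox y \<in> prox_set r \<eta> y"
    and min: "\<And>x. F xstar \<le> F x"
    and Lt_pos: "Lt > 0"
    and out_proper: "proper_sampling n Sout"
    and out_eso: "eso n Sout v'"
    and in_proper: "proper_sampling n Sin"
    and in_eso: "eso n Sin v"
  shows "(1 / (real m * real J)) *
           (\<Sum>j=1..J. \<Sum>t=1..m.
              measure_pmf.expectation (spider_samples Sout Sin J m)
                (\<lambda>(outS, inS). (infdist 0 (frechet_subdiff F
                   (spider_x g n (marg Sin) (marg Sout) prox \<eta> m outS (curry inS) x1 j t)))\<^sup>2))
         \<le> (1 / (real m * real J)) * (24 * Lt + 4 * real m * Q / Lt) * (F x1 - F xstar) + 2 * Q'"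
proof -
  have F_def: "F = (\<lambda>x. (1 / real n) * (\<Sum>i<n. f i x) + r x)" using assms(1) by simp
  have Lt_def: "Lt = (1 / real n) * (\<Sum>i<n. L i)" using assms(2) by simp
  have Q_def: "Q = (\<Sum>i<n. v i * (L i)\<^sup>2 / (marg Sin i * (real n)\<^sup>2))" using assms(3) by simp
  have Q'_def: "Q' = (\<Sum>i<n. v' i * (G i)\<^sup>2 / (marg Sout i * (real n)\<^sup>2))" using assms(4) by simp
  have eta_def: "\<eta> = 1 / (4 * Lt + 2 * real m * Q / Lt)" using assms(5) by simp
  have n0: "n > 0"
  proof (rule ccontr)
    assume "\<not> n > 0" then have "n = 0" by simp
    then have "Lt = 0" using Lt_def by simp
    then show False using Lt_pos by simp
  qed
  define fa where "fa = (\<lambda>x. (1 / real n) * (\<Sum>i<n. f i x))"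
  define gf where "gf = (\<lambda>x. (\<Sum>i<n. (1 / real n) *\<^sub>R g i x))"
  define A where "A = 4 * Lt + 2 * real m * Q / Lt"
  define M where "M = spider_samples Sout Sin J m"
  define X0 where "X0 om j = spider_outer g n (marg Sin) (marg Sout) prox \<eta> m (fst om) (curry (snd om)) x1 (j - 1)" for om j
  define st where "st om j k = spider_inner g n (marg Sin) prox \<eta> (curry (snd om) j) (X0 om j)
                      (spider_V0 g n (marg Sout) (fst om j) (X0 om j)) k" for om j k
  have Fe: "F = (\<lambda>z. fa z + r z)" by (simp add: F_def fa_def)
  have eta: "\<eta> = 1 / A" by (simp add: eta_def A_def)
  have vnn: "\<And>i. i < n \<Longrightarrow> v i \<ge> 0" using eso_v_nonneg[OF in_proper in_eso] by blast
  have v'nn: "\<And>i. i < n \<Longrightarrow> v' i \<ge> 0" using eso_v_nonneg[OF out_proper out_eso] by blast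
  have pin: "\<And>i. i < n \<Longrightarrow> marg Sin i > 0" using in_proper by (simp add: proper_sampling_def)
  have pout: "\<And>i. i < n \<Longrightarrow> marg Sout i > 0" using out_proper by (simp add: proper_sampling_def)
  have Qnn: "Q \<ge> 0" unfolding Q_def using vnn pin by (intro sum_nonneg divide_nonneg_pos mult_nonneg_nonneg) auto
  have Q'nn: "Q' \<ge> 0" unfolding Q'_def using v'nn pout by (intro sum_nonneg divide_nonneg_pos mult_nonneg_nonneg) auto
  have A_ge: "A \<ge> 4 * Lt" unfolding A_def using Qnn Lt_pos by simp
  have kap: "Lt * (A - 4 * Lt) = 2 * real m * Q" unfolding A_def using Lt_pos by (simp add: field_simps)
  have Lnn: "\<And>i. i < n \<Longrightarrow> L i \<ge> 0"
  proof -
    fix i assume i: "i < n"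
    obtain b :: 'a where b: "b \<in> Basis" using nonempty_Basis by blast
    have "0 \<le> norm (g i b - g i 0)" by simp
    also have "\<dots> \<le> L i * norm (b - 0)" by (rule lipschitz[OF i])
    finally show "L i \<ge> 0" using b by (simp add: zero_le_mult_iff)
  qed
  have gd: "\<And>z. GDERIV fa z :> gf z"
  proof -
    fix z
    have "((\<lambda>x. \<Sum>i<n. f i x) has_derivative (\<lambda>h. \<Sum>i<n. inner h (g i z))) (at z)"
      by (rule has_derivative_sum) (use grad in \<open>auto simp: gderiv_def\<close>)
    then have "((\<lambda>x. (1 / real n) * (\<Sum>i<n. f i x)) has_derivative (\<lambda>h. (1 / real n) * (\<Sum>i<n. inner h (g i z)))) (at z)"
      by (rule has_derivative_mult_right)
    then show "GDERIV fa z :> gf z"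
      unfolding gderiv_def fa_def gf_def by (simp add: inner_sum_right sum_distrib_left)
  qed
  have lipf: "\<And>a b. norm (gf a - gf b) \<le> Lt * norm (a - b)"
  proof -
    fix a b :: 'a
    have "gf a - gf b = (1 / real n) *\<^sub>R (\<Sum>i<n. g i a - g i b)"
      by (simp add: gf_def scaleR_sum_right sum_subtractf algebra_simps)
    then have "norm (gf a - gf b) = (1 / real n) * norm (\<Sum>i<n. g i a - g i b)" by simp
    also have "\<dots> \<le> (1 / real n) * (\<Sum>i<n. norm (g i a - g i b))"
      by (intro mult_left_mono norm_sum) simp
    also have "\<dots> \<le> (1 / real n) * (\<Sum>i<n. L i * norm (a - b))"
      by (intro mult_left_mono sum_mono lipschitz) auto
    also have "\<dots> = Lt * norm (a - b)" by (simp add: Lt_def sum_distrib_right)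
    finally show "norm (gf a - gf b) \<le> Lt * norm (a - b)" .
  qed
  have fin_out: "finite (set_pmf Sout)" using out_proper finite_set_pmf_sampling by (auto simp: proper_sampling_def)
  have fin_in: "finite (set_pmf Sin)" using in_proper finite_set_pmf_sampling by (auto simp: proper_sampling_def)
  have finP1: "finite (set_pmf (Pi_pmf {1..J} {} (\<lambda>_. Sout)))" using fin_out by (intro finite_Pi_pmf) auto
  have finP2: "finite (set_pmf (Pi_pmf ({1..J} \<times> {1..m}) {} (\<lambda>_. Sin)))" using fin_in by (intro finite_Pi_pmf) auto
  have finM: "finite (set_pmf M)" using finP1 finP2 by (simp add: M_def spider_samples_def set_pair_pmf)
  have st0: "st om j 0 = (X0 om j, X0 om j, spider_V0 g n (marg Sout) (fst om j) (X0 om j))" for om j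
    by (simp add: st_def)
  have stS1: "fst (st om j (Suc k)) = fst (snd (st om j k))" for om j k
    unfolding st_def by (rule inner_Suc_parts(1))
  have stS2: "snd (snd (st om j (Suc k))) = (\<Sum>i\<in>snd om (j, Suc k). (1 / (real n * marg Sin i)) *\<^sub>R
       (g i (fst (snd (st om j k))) - g i (fst (st om j k)))) + snd (snd (st om j k))" for om j k
    unfolding st_def by (subst inner_Suc_parts(2)) simp
  have stS3: "fst (snd (st om j (Suc k))) = prox (fst (st om j (Suc k)) - \<eta> *\<^sub>R snd (snd (st om j (Suc k))))" for om j k
    unfolding stS1 unfolding st_def by (rule inner_Suc_parts(3))
  have Xnext: "X0 om (Suc j) = fst (snd (st om j m))" if "1 \<le> j" for om j
  proof -
    define j' where "j' = j - 1"
    have j': "j = Suc j'" using that by (simp add: j'_def)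
    show ?thesis by (simp add: X0_def st_def j' Let_def)
  qed
  have X1: "X0 om 1 = x1" for om by (simp add: X0_def)
  have sx: "spider_x g n (marg Sin) (marg Sout) prox \<eta> m o1 (curry o2) x1 j t = fst (snd (st (o1, o2) j t))" for o1 o2 j t
    by (simp add: spider_x_def st_def X0_def Let_def)
  have X0_fst: "X0 (o1(j := s), o2) j = X0 (o1, o2) j" if "1 \<le> j" for o1 o2 j s
    unfolding X0_def by (simp, rule spider_outer_cong) (use that in auto)
  have X0_snd: "X0 (o1, o2((j, t) := s)) j = X0 (o1, o2) j" if "1 \<le> j" for o1 o2 j t s
    unfolding X0_def by (simp, rule spider_outer_cong) (use that in \<open>auto simp: fun_eq_iff\<close>)
  have st_snd: "st (o1, o2((j, Suc t) := s)) j t = st (o1, o2) j t" if "1 \<le> j" for o1 o2 j t s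
    unfolding st_def X0_snd[OF that] by (simp, rule spider_inner_cong) auto
  have P1pt: "measure_pmf.expectation Sout (\<lambda>S. (norm (gf x - spider_V0 g n (marg Sout) S x))\<^sup>2) \<le> Q'" for x
  proof -
    define w where "w i = (1 / (real n * marg Sout i)) *\<^sub>R g i x" for i
    have mu: "(\<Sum>i<n. marg Sout i *\<^sub>R w i) = gf x"
      unfolding gf_def w_def using pout by (intro sum.cong) (auto dest: pout simp: less_imp_neq[symmetric])
    have V0: "spider_V0 g n (marg Sout) S x = (\<Sum>i\<in>S. w i)" for S by (simp add: spider_V0_def w_def)
    have "measure_pmf.expectation Sout (\<lambda>S. (norm (gf x - spider_V0 g n (marg Sout) S x))\<^sup>2)
        = measure_pmf.expectation Sout (\<lambda>S. (norm (0 + (\<Sum>i<n. marg Sout i *\<^sub>R w i) - (\<Sum>i\<in>S. w i)))\<^sup>2)"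
      by (simp add: mu V0)
    also have "\<dots> \<le> (norm (0::'a))\<^sup>2 + (\<Sum>i<n. marg Sout i * v' i * (norm (w i))\<^sup>2)"
      by (rule sampling_var[OF out_proper out_eso])
    also have "\<dots> \<le> Q'"
      unfolding Q'_def
    proof (simp, rule sum_mono)
      fix i assume "i \<in> {..<n}"
      then have i: "i < n" by simp
      have p: "marg Sout i > 0" using pout[OF i] .
      have g2: "(norm (g i x))\<^sup>2 \<le> (G i)\<^sup>2" using bounded[OF i, of x] by (intro power_mono) auto
      have nw: "norm (w i) = norm (g i x) / (real n * marg Sout i)"
        unfolding w_def norm_scaleR using p n0 by simp
      have "marg Sout i * v' i * (norm (w i))\<^sup>2 = v' i * (norm (g i x))\<^sup>2 / (marg Sout i * (real n)\<^sup>2)"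
        using p n0 unfolding nw by (simp add: power2_eq_square field_simps)
      also have "\<dots> \<le> v' i * (G i)\<^sup>2 / (marg Sout i * (real n)\<^sup>2)"
        using p n0 v'nn[OF i] g2 by (intro divide_right_mono mult_left_mono) auto
      finally show "marg Sout i * v' i * (norm (w i))\<^sup>2 \<le> v' i * (G i)\<^sup>2 / (marg Sout i * (real n)\<^sup>2)" .
    qed
    finally show ?thesis .
  qed
  have P2pt: "measure_pmf.expectation Sin (\<lambda>S. (norm (gf xb - ((\<Sum>i\<in>S. (1 / (real n * marg Sin i)) *\<^sub>R (g i xb - g i xa)) + V)))\<^sup>2)
       \<le> (norm (gf xa - V))\<^sup>2 + Q * (norm (xb - xa))\<^sup>2" for xa xb V
  proof -
    define w where "w i = (1 / (real n * marg Sin i)) *\<^sub>R (g i xb - g i xa)" for i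
    have mu: "(\<Sum>i<n. marg Sin i *\<^sub>R w i) = gf xb - gf xa"
    proof -
      have "(\<Sum>i<n. marg Sin i *\<^sub>R w i) = (\<Sum>i<n. (1 / real n) *\<^sub>R g i xb - (1 / real n) *\<^sub>R g i xa)"
        unfolding w_def using pin by (intro sum.cong) (auto simp: scaleR_diff_right dest: pin simp: less_imp_neq[symmetric])
      then show ?thesis by (simp add: gf_def sum_subtractf)
    qed
    have "measure_pmf.expectation Sin (\<lambda>S. (norm (gf xb - ((\<Sum>i\<in>S. (1 / (real n * marg Sin i)) *\<^sub>R (g i xb - g i xa)) + V)))\<^sup>2)
        = measure_pmf.expectation Sin (\<lambda>S. (norm ((gf xa - V) + (\<Sum>i<n. marg Sin i *\<^sub>R w i) - (\<Sum>i\<in>S. w i)))\<^sup>2)"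
    proof -
      have "(\<lambda>S. (norm (gf xb - ((\<Sum>i\<in>S. (1 / (real n * marg Sin i)) *\<^sub>R (g i xb - g i xa)) + V)))\<^sup>2)
          = (\<lambda>S. (norm ((gf xa - V) + (gf xb - gf xa) - (\<Sum>i\<in>S. w i)))\<^sup>2)"
        by (simp add: w_def fun_eq_iff algebra_simps)
      then show ?thesis by (simp only: mu)
    qed
    also have "\<dots> \<le> (norm (gf xa - V))\<^sup>2 + (\<Sum>i<n. marg Sin i * v i * (norm (w i))\<^sup>2)"
      by (rule sampling_var[OF in_proper in_eso])
    also have "(\<Sum>i<n. marg Sin i * v i * (norm (w i))\<^sup>2) \<le> Q * (norm (xb - xa))\<^sup>2"
      unfolding Q_def sum_distrib_right
    proof (rule sum_mono)
      fix i assume "i \<in> {..<n}"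
      then have i: "i < n" by simp
      have p: "marg Sin i > 0" using pin[OF i] .
      have g2: "(norm (g i xb - g i xa))\<^sup>2 \<le> (L i)\<^sup>2 * (norm (xb - xa))\<^sup>2"
        using lipschitz[OF i, of xb xa] by (simp add: power_mult_distrib[symmetric]) (intro power_mono, auto)
      have nw: "norm (w i) = norm (g i xb - g i xa) / (real n * marg Sin i)"
        unfolding w_def norm_scaleR using p n0 by simp
      have "marg Sin i * v i * (norm (w i))\<^sup>2 = v i * (norm (g i xb - g i xa))\<^sup>2 / (marg Sin i * (real n)\<^sup>2)"
        using p n0 unfolding nw by (simp add: power2_eq_square field_simps)
      also have "\<dots> \<le> v i * ((L i)\<^sup>2 * (norm (xb - xa))\<^sup>2) / (marg Sin i * (real n)\<^sup>2)"
        using p n0 vnn[OF i] g2 by (intro divide_right_mono mult_left_mono) auto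
      finally show "marg Sin i * v i * (norm (w i))\<^sup>2 \<le> v i * (L i)\<^sup>2 / (marg Sin i * (real n)\<^sup>2) * (norm (xb - xa))\<^sup>2"
        by (simp add: field_simps)
    qed
    finally show ?thesis by simp
  qed
  define lam where "lam = 2 * A + 4 * Lt"
  have epoch: "(\<Sum>t\<in>{1..m}. measure_pmf.expectation M (\<lambda>om. (infdist 0 (frechet_subdiff F (fst (snd (st om j t)))))\<^sup>2))
      \<le> 2 * real m * Q' + lam * (measure_pmf.expectation M (\<lambda>om. F (X0 om j)) - measure_pmf.expectation M (\<lambda>om. F (X0 om (Suc j))))"
    if j1: "1 \<le> j" and jJ: "j \<le> J" for j
  proof -
    define U where "U t = measure_pmf.expectation M (\<lambda>om. (norm (gf (fst (st om j t)) - snd (snd (st om j t))))\<^sup>2)" for t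
    define Dd where "Dd t = measure_pmf.expectation M (\<lambda>om. (norm (fst (snd (st om j t)) - fst (st om j t)))\<^sup>2)" for t
    define a where "a t = measure_pmf.expectation M (\<lambda>om. F (fst (st om j t)))" for t
    define Dist where "Dist t = measure_pmf.expectation M (\<lambda>om. (infdist 0 (frechet_subdiff F (fst (snd (st om j t)))))\<^sup>2)" for t
    have U0: "U 0 \<le> Q'"
    proof -
      have "U 0 = measure_pmf.expectation M (\<lambda>om. (\<lambda>x S. (norm (gf x - spider_V0 g n (marg Sout) S x))\<^sup>2) (X0 om j) (fst om j))"
        by (simp add: U_def st0)
      also have "\<dots> = measure_pmf.expectation M (\<lambda>om. measure_pmf.expectation Sout (\<lambda>S. (\<lambda>x S. (norm (gf x - spider_V0 g n (marg Sout) S x))\<^sup>2) (X0 om j) S))"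
        unfolding M_def spider_samples_def
        apply (rule indep_fst[where h = "\<lambda>om. X0 om j" and \<phi> = "\<lambda>x S. (norm (gf x - spider_V0 g n (marg Sout) S x))\<^sup>2"])
        using j1 jJ fin_out finP2 X0_fst by auto
      also have "\<dots> \<le> measure_pmf.expectation M (\<lambda>om. Q')"
        using P1pt by (intro E_mono[OF finM]) simp
      also have "\<dots> = Q'" by (rule E_const[OF finM])
      finally show ?thesis .
    qed
    have Ustep: "U (Suc t) \<le> U t + Q * Dd t" if tm: "t < m" for t
    proof -
      define \<psi> where "\<psi> s S = (norm (gf (fst (snd s)) - ((\<Sum>i\<in>S. (1 / (real n * marg Sin i)) *\<^sub>R
          (g i (fst (snd s)) - g i (fst s))) + snd (snd s))))\<^sup>2" for s :: "'a \<times> 'a \<times> 'a" and S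
      have "U (Suc t) = measure_pmf.expectation M (\<lambda>om. \<psi> (st om j t) (snd om (j, Suc t)))"
        by (simp add: U_def stS1 stS2 \<psi>_def)
      also have "\<dots> = measure_pmf.expectation M (\<lambda>om. measure_pmf.expectation Sin (\<lambda>S. \<psi> (st om j t) S))"
        unfolding M_def spider_samples_def
        apply (rule indep_snd[where h = "\<lambda>om. st om j t" and \<phi> = \<psi>])
        using j1 jJ tm fin_in finP1 st_snd by auto
      also have "\<dots> \<le> measure_pmf.expectation M (\<lambda>om. (norm (gf (fst (st om j t)) - snd (snd (st om j t))))\<^sup>2
                   + Q * (norm (fst (snd (st om j t)) - fst (st om j t)))\<^sup>2)"
        unfolding \<psi>_def using P2pt by (intro E_mono[OF finM]) simp
      also have "\<dots> = U t + Q * Dd t"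
        by (simp add: E_add[OF finM] E_cmult[OF finM] U_def Dd_def)
      finally show ?thesis .
    qed
    have D0: "Dd 0 = 0" by (simp add: Dd_def st0 E_const[OF finM])
    have Dnn: "Dd t \<ge> 0" for t unfolding Dd_def by (intro E_nonneg[OF finM]) simp
    have Dist: "Dist t \<le> 2 * U t + lam * (a t - a (Suc t)) - 2 * real m * Q * Dd t"
      if t1: "1 \<le> t" and tm: "t \<le> m" for t
    proof -
      define k where "k = t - 1"
      have tk: "t = Suc k" using t1 by (simp add: k_def)
      have pt: "(infdist 0 (frechet_subdiff F (fst (snd (st om j t)))))\<^sup>2
          \<le> 2 * (norm (gf (fst (st om j t)) - snd (snd (st om j t))))\<^sup>2
            + lam * (F (fst (st om j t)) - F (fst (st om j (Suc t))))
            - 2 * real m * Q * (norm (fst (snd (st om j t)) - fst (st om j t)))\<^sup>2" for om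
      proof -
        have xn: "fst (snd (st om j t)) \<in> prox_set r (1/A) (fst (st om j t) - (1/A) *\<^sub>R snd (snd (st om j t)))"
          unfolding tk stS3[of om j k] using prox_sel eta by simp
        have "(infdist 0 (frechet_subdiff (\<lambda>z. fa z + r z) (fst (snd (st om j t)))))\<^sup>2
          \<le> 2 * (norm (gf (fst (st om j t)) - snd (snd (st om j t))))\<^sup>2
            + (2*A + 4*Lt) * ((fa (fst (st om j t)) + r (fst (st om j t))) - (fa (fst (snd (st om j t))) + r (fst (snd (st om j t)))))
            - Lt * (A - 4*Lt) * (norm (fst (snd (st om j t)) - fst (st om j t)))\<^sup>2"
          by (rule step_ineq[OF gd lipf Lt_pos A_ge xn])
        then show ?thesis unfolding Fe kap lam_def stS1 by simp
      qed
      have "Dist t \<le> measure_pmf.expectation M (\<lambda>om. 2 * (norm (gf (fst (st om j t)) - snd (snd (st om j t))))\<^sup>2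
            + lam * (F (fst (st om j t)) - F (fst (st om j (Suc t))))
            - 2 * real m * Q * (norm (fst (snd (st om j t)) - fst (st om j t)))\<^sup>2)"
        unfolding Dist_def using pt by (intro E_mono[OF finM]) simp
      also have "\<dots> = 2 * U t + lam * (a t - a (Suc t)) - 2 * real m * Q * Dd t"
        by (simp add: E_add[OF finM] E_diff[OF finM] E_cmult[OF finM] U_def Dd_def a_def)
      finally show ?thesis .
    qed
    have "(\<Sum>t\<in>{1..m}. Dist t) \<le> 2 * real m * Q' + lam * (a 1 - a (Suc m))"
      by (rule epoch_sum[OF U0 Ustep D0 Dnn Qnn Dist])
    moreover have "a 1 = measure_pmf.expectation M (\<lambda>om. F (X0 om j))"
      by (simp add: a_def stS1[of _ j 0, simplified] st0)
    moreover have "a (Suc m) = measure_pmf.expectation M (\<lambda>om. F (X0 om (Suc j)))"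
      by (simp add: a_def stS1 Xnext[OF j1])
    ultimately show ?thesis by (simp add: Dist_def)
  qed
  define b where "b j = measure_pmf.expectation M (\<lambda>om. F (X0 om j))" for j
  define Sm where "Sm = (\<Sum>j=1..J. \<Sum>t=1..m.
              measure_pmf.expectation (spider_samples Sout Sin J m)
                (\<lambda>(outS, inS). (infdist 0 (frechet_subdiff F
                   (spider_x g n (marg Sin) (marg Sout) prox \<eta> m outS (curry inS) x1 j t)))\<^sup>2))"
  have integ: "(\<lambda>(outS, inS). (infdist 0 (frechet_subdiff F
                   (spider_x g n (marg Sin) (marg Sout) prox \<eta> m outS (curry inS) x1 j t)))\<^sup>2)
      = (\<lambda>om. (infdist 0 (frechet_subdiff F (fst (snd (st om j t)))))\<^sup>2)" for j t
    by (auto simp: fun_eq_iff sx)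
  have "Sm = (\<Sum>j=1..J. \<Sum>t=1..m. measure_pmf.expectation M (\<lambda>om. (infdist 0 (frechet_subdiff F (fst (snd (st om j t)))))\<^sup>2))"
    unfolding Sm_def integ M_def ..
  also have "\<dots> \<le> (\<Sum>j=1..J. 2 * real m * Q' + lam * (b j - b (Suc j)))"
    unfolding b_def by (intro sum_mono epoch) auto
  also have "\<dots> = (\<Sum>j=1..J. 2 * real m * Q') + (\<Sum>j=1..J. lam * (b j - b (Suc j)))"
    by (rule sum.distrib)
  also have "(\<Sum>j=1..J. lam * (b j - b (Suc j))) = lam * (b 1 - b (Suc J))"
    by (subst sum_distrib_left[symmetric]) (rule arg_cong[where f="\<lambda>x. lam * x"], rule telescope_real)
  also have "b 1 = F x1" unfolding b_def X1 by (rule E_const[OF finM])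
  finally have S1: "Sm \<le> real J * (2 * real m * Q') + lam * (F x1 - b (Suc J))" by simp
  have bJ: "F xstar \<le> b (Suc J)"
  proof -
    have "F xstar = measure_pmf.expectation M (\<lambda>om. F xstar)" by (rule E_const[OF finM, symmetric])
    also have "\<dots> \<le> b (Suc J)" unfolding b_def using min by (intro E_mono[OF finM]) auto
    finally show ?thesis .
  qed
  have lam_nn: "lam \<ge> 0" unfolding lam_def using A_ge Lt_pos by simp
  have S2: "Sm \<le> 2 * real m * real J * Q' + lam * (F x1 - F xstar)"
    using S1 mult_left_mono[OF bJ lam_nn] by (simp add: algebra_simps)
  have Dnn: "F x1 - F xstar \<ge> 0" using min[of x1] by simp
  have lam_le: "lam \<le> 24 * Lt + 4 * real m * Q / Lt"
    unfolding lam_def A_def using Lt_pos by (simp add: field_simps)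
  show ?thesis
  proof (cases "m = 0 \<or> J = 0")
    case True
    then show ?thesis using Q'nn by auto
  next
    case False
    then have mJ: "real m * real J > 0" by simp
    have "(1 / (real m * real J)) * Sm \<le> (1 / (real m * real J)) * (2 * real m * real J * Q' + lam * (F x1 - F xstar))"
      using S2 mJ by (intro mult_left_mono) auto
    also have "\<dots> = (1 / (real m * real J)) * lam * (F x1 - F xstar) + 2 * Q'"
    proof -
      have m0: "real m \<noteq> 0" "real J \<noteq> 0" using False by auto
      have c: "(1 / (real m * real J)) * (2 * real m * real J * Q') = 2 * Q'" using m0 by (simp add: field_simps)
      show ?thesis by (simp only: distrib_left c)
    qed
    also have "\<dots> \<le> (1 / (real m * real J)) * (24 * Lt + 4 * real m * Q / Lt) * (F x1 - F xstar) + 2 * Q'"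
      using mJ lam_le Dnn by (intro add_right_mono mult_right_mono mult_left_mono) auto
    finally show ?thesis unfolding Sm_def .
  qed
qed

end
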